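(* Suppose the bandwidth is insufficient, i.e. $BW_{max,EUT}\le\sum_{i\in S_{EUT}}\bar F^{-1}_{B_i}(\lambda_i;b^* )$ with $\lambda_i=w^{-1}(r_{EUT}(b^* )/h_i(b^* ))$, and all users under-weight the service guarantee, i.e. $w(\bar F_{B_i}(b^*;BW_{i,EUT}))<\bar F_{B_i}(b^*;BW_{i,EUT})$ for all $i\in S_{EUT}$. Suppose the SP keeps the strict radio-resource-management constraints (same user set $S_{EUT}$, same rate $b^*$, same total bandwidth $BW_{max,EUT}$ and same allocation $(BW_{i,EUT})$) and charges a new price $r_{PT}(b^* )$ such that every user in $S_{EUT}$ accepts under prospect theory. Then $$r_{EUT}(b^* )-r_{PT}(b^* )>L_{RRM}:=\max_{i\in S_{EUT}}\Big\{r_{EUT}(b^* )-h_i(b^* )\,w\big(\bar F_{B_i}(b^*;BW_{i,EUT})\big)\Big\}\ge 0,$$ so the SP's revenue per user decreases by more than $L_{RRM}$ relative to the EUT equilibrium.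
   Context: A service provider (SP) serves a finite set $S_{EUT}$ of end-users. For each user $i$ there is a benefit function $h_i:(0,\infty)\to(0,\infty)$ and, for each rate $b>0$, a service-guarantee function $BW\mapsto\bar F_{B_i}(b;BW)$ from $[0,\infty)$ to $[0,1)$, continuous and strictly increasing with $\bar F_{B_i}(b;0)=0$. The EUT pricing function is $r_{EUT}:(0,\infty)\to(0,\infty)$. Unit costs $c_1>0$ (rate) and $c_3>0$ (bandwidth); when a set $S$ of users all accept an offer at rate $b$ and price $r$ with bandwidths summing to $BW_{tot}$, the SP's revenue is $|S|(r-c_1b)-c_3BW_{tot}$. A probability weighting function $w:[0,1]\to[0,1]$ is a continuous strictly increasing bijection (e.g. Prelec's $w(p)=\exp(-(-\ln p)^\alpha)$, $\alpha\in(0,1]$). A user offered rate $b$ at price $r$ with bandwidth $BW_i$ accepts under EUT iff $h_i(b)\bar F_{B_i}(b;BW_i)>r$, and under prospect theory (PT) iff $h_i(b)\,w(\bar F_{B_i}(b;BW_i))>r$. Notation: for $q\ge0$, $\bar F^{-1}_{B_i}(q;b)$ is the unique $BW\ge0$ with $\bar F_{B_i}(b;BW)=q$ if $q$ lies in the range of $\bar F_{B_i}(b;\cdot)$ and $+\infty$ otherwise; $w^{-1}(x):=+\infty$ for $x>1$ and $\bar F^{-1}_{B_i}(+\infty;b):=+\infty$. EUT equilibrium data: a rate $b^*=b^*_{1,EUT}>0$ and bandwidths $BW_{i,EUT}\ge0$, $i\in S_{EUT}$, with $\sum_{i}BW_{i,EUT}=BW_{max,EUT}$, such that every $i\in S_{EUT}$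 accepts under EUT the offer of rate $b^*$ at price $r_{EUT}(b^* )$ with bandwidth $BW_{i,EUT}$. *)

theory Defs
  imports "HOL-Analysis.Analysis"
begin

text \<open>Inverse probability weighting: w^{-1}(x) for x in [0,1] (w is a bijection of [0,1]);
  w^{-1}(x) = +infinity for x > 1 (and, by convention, outside [0,1]).\<close>
definition winv :: "(real \<Rightarrow> real) \<Rightarrow> real \<Rightarrow> ereal" where
  "winv w x = (if x \<in> {0..1} then ereal (THE p. p \<in> {0..1} \<and> w p = x) else \<infinity>)"

definition Finv :: "(real \<Rightarrow> real \<Rightarrow> real) \<Rightarrow> real \<Rightarrow> ereal \<Rightarrow> ereal" where
  "Finv F b q = (if \<exists>BW. BW \<ge> 0 \<and> ereal (F b BW) = q
                  then ereal (THE BW. BW \<ge> 0 \<and> ereal (F b BW) = q) else \<infinity>)"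

text \<open>SP revenue when all users in S accept rate b at price r with total bandwidth BWtot.\<close>
definition revenue :: "real \<Rightarrow> real \<Rightarrow> 'u set \<Rightarrow> real \<Rightarrow> real \<Rightarrow> real \<Rightarrow> real" where
  "revenue c1 c3 S b r BWtot = real (card S) * (r - c1 * b) - c3 * BWtot"

end

theory Submission
  imports Defs
begin

theorem theorem3:
  fixes S :: "'u set"
    and h :: "'u \<Rightarrow> real \<Rightarrow> real"
    and Fbar :: "'u \<Rightarrow> real \<Rightarrow> real \<Rightarrow> real"
    and rEUT :: "real \<Rightarrow> real"
    and w :: "real \<Rightarrow> real"
    and c1 c3 bstar BWmax rPT :: real
    and BW :: "'u \<Rightarrow> real"
  assumes S_fin: "finite S" and S_ne: "S \<noteq> {}"
    and h_pos: "\<And>i b. i \<in> S \<Longrightarrow> b > 0 \<Longrightarrow> h i b > 0"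
    and F_cont: "\<And>i b. i \<in> S \<Longrightarrow> b > 0 \<Longrightarrow> continuous_on {0..} (Fbar i b)"
    and F_mono: "\<And>i b. i \<in> S \<Longrightarrow> b > 0 \<Longrightarrow> strict_mono_on {0..} (Fbar i b)"
    and F_range: "\<And>i b x. i \<in> S \<Longrightarrow> b > 0 \<Longrightarrow> x \<ge> 0 \<Longrightarrow> Fbar i b x \<in> {0..<1}"
    and F_zero: "\<And>i b. i \<in> S \<Longrightarrow> b > 0 \<Longrightarrow> Fbar i b 0 = 0"
    and r_pos: "\<And>b. b > 0 \<Longrightarrow> rEUT b > 0"
    and c1_pos: "c1 > 0" and c3_pos: "c3 > 0"
    and w_cont: "continuous_on {0..1} w"
    and w_mono: "strict_mono_on {0..1} w"
    and w_bij: "bij_betw w {0..1} {0..1}"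
    and b_pos: "bstar > 0"
    and BW_nonneg: "\<And>i. i \<in> S \<Longrightarrow> BW i \<ge> 0"
    and BW_sum: "(\<Sum>i\<in>S. BW i) = BWmax"
    and EUT_accept: "\<And>i. i \<in> S \<Longrightarrow> h i bstar * Fbar i bstar (BW i) > rEUT bstar"
    and insufficient: "ereal BWmax \<le>
        (\<Sum>i\<in>S. Finv (Fbar i) bstar (winv w (rEUT bstar / h i bstar)))"
    and underweight: "\<And>i. i \<in> S \<Longrightarrow> w (Fbar i bstar (BW i)) < Fbar i bstar (BW i)"
    and PT_accept: "\<And>i. i \<in> S \<Longrightarrow> h i bstar * w (Fbar i bstar (BW i)) > rPT"
  shows "rEUT bstar - rPT > Max ((\<lambda>i. rEUT bstar - h i bstar * w (Fbar i bstar (BW i))) ` S)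
       \<and> Max ((\<lambda>i. rEUT bstar - h i bstar * w (Fbar i bstar (BW i))) ` S) \<ge> 0
       \<and> (revenue c1 c3 S bstar (rEUT bstar) BWmax - revenue c1 c3 S bstar rPT BWmax) / real (card S)
           > Max ((\<lambda>i. rEUT bstar - h i bstar * w (Fbar i bstar (BW i))) ` S)"
proof -
  define g where "g = (\<lambda>i. rEUT bstar - h i bstar * w (Fbar i bstar (BW i)))"
  have fin: "finite (g ` S)" and ne: "g ` S \<noteq> {}" using S_fin S_ne by auto
  obtain j where jS: "j \<in> S" and jM: "Max (g ` S) = g j"
    using Max_in[OF fin ne] by auto
  have A: "rEUT bstar - rPT > Max (g ` S)"
    using PT_accept[OF jS] jM unfolding g_def by simp
  have B: "Max (g ` S) \<ge> 0"
  proof (rule ccontr)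
    assume "\<not> Max (g ` S) \<ge> 0"
    hence all: "\<forall>i\<in>S. g i < 0" using Max_ge[OF fin] by force
    have key: "\<forall>i\<in>S. \<exists>x. Finv (Fbar i) bstar (winv w (rEUT bstar / h i bstar)) = ereal x \<and> x < BW i"
    proof
      fix i assume iS: "i \<in> S"
      define F where "F = Fbar i bstar (BW i)"
      define q where "q = rEUT bstar / h i bstar"
      have hp: "h i bstar > 0" using h_pos iS b_pos by auto
      have rp: "rEUT bstar > 0" using r_pos b_pos by auto
      have F01: "F \<in> {0..<1}" unfolding F_def using F_range iS b_pos BW_nonneg by auto
      have wF: "w F \<in> {0..1}" using w_bij F01 bij_betwE by fastforce
      have qlt: "q < w F" using all iS hp unfolding g_def q_def F_def by (simp add: field_simps)
      have "q \<ge> 0" using rp hp unfolding q_def by simp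
      moreover have "q \<le> 1" using qlt wF by simp
      ultimately have q01: "q \<in> {0..1}" by simp
      obtain p where p: "p \<in> {0..1}" "w p = q" using w_bij q01
        by (metis bij_betw_def imageE)
      have inj: "inj_on w {0..1}" using w_bij bij_betw_def by blast
      have theP: "(THE p. p \<in> {0..1} \<and> w p = q) = p"
        by (rule the_equality) (use p inj in \<open>auto simp: inj_on_def\<close>)
      have wi: "winv w q = ereal p" unfolding winv_def using q01 theP by simp
      have pF: "p < F"
      proof (rule ccontr)
        assume "\<not> p < F"
        hence "F \<le> p" by simp
        hence "w F \<le> w p" using w_mono F01 p(1)
          by (metis atLeastAtMost_iff atLeastLessThan_iff less_eq_real_def strict_mono_onD)
        thus False using qlt p by simp
      qed
      have cont: "continuous_on {0..BW i} (Fbar i bstar)"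
        using F_cont[OF iS b_pos] continuous_on_subset by fastforce
      obtain x where x: "x \<ge> 0" "x \<le> BW i" "Fbar i bstar x = p"
        using IVT'[of "Fbar i bstar" 0 p "BW i"] F_zero[OF iS b_pos] p(1) pF cont BW_nonneg[OF iS]
        unfolding F_def by auto
      have sm: "strict_mono_on {0..} (Fbar i bstar)" using F_mono iS b_pos by auto
      have injF: "inj_on (Fbar i bstar) {0..}" using strict_mono_on_imp_inj_on[OF sm] .
      have theX: "(THE BW. BW \<ge> 0 \<and> ereal (Fbar i bstar BW) = ereal p) = x"
        by (rule the_equality) (use x injF in \<open>auto simp: inj_on_def\<close>)
      have Fi: "Finv (Fbar i) bstar (ereal p) = ereal x"
        unfolding Finv_def using x theX by auto
      have "x \<noteq> BW i" using x pF unfolding F_def by auto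
      hence "x < BW i" using x by simp
      thus "\<exists>x. Finv (Fbar i) bstar (winv w (rEUT bstar / h i bstar)) = ereal x \<and> x < BW i"
        using Fi wi unfolding q_def by auto
    qed
    then obtain X where X: "\<And>i. i \<in> S \<Longrightarrow> Finv (Fbar i) bstar (winv w (rEUT bstar / h i bstar)) = ereal (X i) \<and> X i < BW i"
      by metis
    have "(\<Sum>i\<in>S. Finv (Fbar i) bstar (winv w (rEUT bstar / h i bstar))) = (\<Sum>i\<in>S. ereal (X i))"
      using X by (intro sum.cong) auto
    also have "\<dots> = ereal (\<Sum>i\<in>S. X i)" by (simp add: sum_ereal)
    finally have "ereal BWmax \<le> ereal (\<Sum>i\<in>S. X i)" using insufficient by simp
    hence "BWmax \<le> (\<Sum>i\<in>S. X i)" by simp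
    moreover have "(\<Sum>i\<in>S. X i) < (\<Sum>i\<in>S. BW i)"
      using sum_strict_mono[OF S_fin S_ne] X by auto
    ultimately show False using BW_sum by simp
  qed
  have C: "(revenue c1 c3 S bstar (rEUT bstar) BWmax - revenue c1 c3 S bstar rPT BWmax) / real (card S)
      = rEUT bstar - rPT"
    using S_fin S_ne by (simp add: revenue_def field_simps card_gt_0_iff)
  show ?thesis using A B C unfolding g_def by simp
qed

end
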